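(* Let $G$ be a group with finite generating set $(X,\pi)$ and let $\tau\colon G\to\mathbb{Z}$ be an ordering quasi-morphism with kernel $C$. If a $\tau$-transducer exists, then $P_\tau=\{g\in G:\tau(g)>0\}$ is a one-counter positive cone relative to $C$, i.e. $P_\tau$ is a positive cone relative to $C$ and there is a one-counter language $\mathcal{L}\subseteq X^*$ with $\pi(\mathcal{L})=P_\tau$. In particular, if there is a one-counter language $\mathcal{L}_C\subseteq X^*$ such that $P_C=\pi(\mathcal{L}_C)$ is a positive cone for $C$, then $P_\tau\cup P_C$ is the image under $\pi$ of a one-counter language and is a positive cone of $G$.
   Context: A finite generating set is a finite set $X$ with a surjective monoid homomorphism $\pi\colon X^*\to G$. For a subgroup $K\le G$, a positive cone relative to $K$ is a subsemigroup $P$ with $G=P\sqcup K\sqcup P^{-1}$; a positive cone is one relative to $\{1\}$. A one-counter language is one accepted by a nondeterministic pushdown automaton with a single stack symbol. An ordering quasi-morphism is $\tau\colon G\to\mathbb{Z}$ such that (i) $C=\{g:\tau(g)=0\}$ is a subgroup (the kernel), (ii) $\tau(g^{-1})=-\tau(g)$, (iii) $\tau(g)+\tau(h)+\tau((gh)^{-1})\le1$ for all $g,h$. A rational transducer $\mathbb{T}=(\mathcal{S},X,Y,\delta,s_0,\mathcal{A})$ has finite state set $\mathcal{S}$, input alphabet $X$, output alphabet $Y$, initial state $s_0$, accepting states $\mathcal{A}$ and $\delta\colon\mathcal{S}\times(X\sqcup\{\epsilon\})\to$ finite subsets of $\mathcal{S}\times Y^*$; $(r,v)\in\delta(s,u)$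 means there is a sequence of transitions from $s$ to $r$ with inputs concatenating to $u$ and outputs to $v$. $\mathbb{T}(u)=\{v:(a,v)\in\delta(s_0,u),a\in\mathcal{A}\}$ and $\mathbb{T}^{-1}(\mathcal{M})=\{u:\exists(a,v)\in\delta(s_0,u),a\in\mathcal{A},v\in\mathcal{M}\}$. With $\pi_{\mathbb{Z}}\colon\{t,t^{-1}\}^*\to\mathbb{Z}$, $t\mapsto1,t^{-1}\mapsto-1$, a $\tau$-transducer is a rational transducer with input alphabet $X$ and output alphabet $\{t,t^{-1}\}$ such that $G=\pi(\mathbb{T}^{-1}(\{t,t^{-1}\}^* ))$ and $\pi_{\mathbb{Z}}(v)=\tau(\pi(w))$ for every $w\in\mathbb{T}^{-1}(\{t,t^{-1}\}^* )$ and $v\in\mathbb{T}(w)$. *)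

theory Defs
  imports "HOL-Algebra.Group"
begin

definition finite_gen_set :: "('a, 'b) monoid_scheme \<Rightarrow> 'x set \<Rightarrow> ('x list \<Rightarrow> 'a) \<Rightarrow> bool" where
  "finite_gen_set G X \<pi> \<longleftrightarrow> finite X
     \<and> (\<forall>w \<in> lists X. \<pi> w \<in> carrier G)
     \<and> \<pi> [] = \<one>\<^bsub>G\<^esub>
     \<and> (\<forall>u \<in> lists X. \<forall>v \<in> lists X. \<pi> (u @ v) = \<pi> u \<otimes>\<^bsub>G\<^esub> \<pi> v)
     \<and> \<pi> ` lists X = carrier G"

definition pos_cone_rel :: "('a, 'b) monoid_scheme \<Rightarrow> 'a set \<Rightarrow> 'a set \<Rightarrow> bool" where
  "pos_cone_rel G K P \<longleftrightarrow> P \<subseteq> carrier G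
     \<and> (\<forall>a \<in> P. \<forall>b \<in> P. a \<otimes>\<^bsub>G\<^esub> b \<in> P)
     \<and> P \<inter> K = {} \<and> P \<inter> (\<lambda>x. inv\<^bsub>G\<^esub> x) ` P = {} \<and> K \<inter> (\<lambda>x. inv\<^bsub>G\<^esub> x) ` P = {}
     \<and> carrier G = P \<union> K \<union> (\<lambda>x. inv\<^bsub>G\<^esub> x) ` P"

definition pos_cone :: "('a, 'b) monoid_scheme \<Rightarrow> 'a set \<Rightarrow> bool" where
  "pos_cone G P \<longleftrightarrow> pos_cone_rel G {\<one>\<^bsub>G\<^esub>} P"

definition ordering_quasi_morphism :: "('a, 'b) monoid_scheme \<Rightarrow> ('a \<Rightarrow> int) \<Rightarrow> bool" where
  "ordering_quasi_morphism G \<tau> \<longleftrightarrow>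
     subgroup {g \<in> carrier G. \<tau> g = 0} G
     \<and> (\<forall>g \<in> carrier G. \<tau> (inv\<^bsub>G\<^esub> g) = - \<tau> g)
     \<and> (\<forall>g \<in> carrier G. \<forall>h \<in> carrier G. \<tau> g + \<tau> h + \<tau> (inv\<^bsub>G\<^esub> (g \<otimes>\<^bsub>G\<^esub> h)) \<le> 1)"

definition qm_kernel :: "('a, 'b) monoid_scheme \<Rightarrow> ('a \<Rightarrow> int) \<Rightarrow> 'a set" where
  "qm_kernel G \<tau> = {g \<in> carrier G. \<tau> g = 0}"

fun opt_word :: "'x option \<Rightarrow> 'x list" where
  "opt_word None = []"
| "opt_word (Some x) = [x]"

text \<open>A one-counter automaton is a nondeterministic pushdown automaton whose stack alphabet
  consists of a single symbol Z above a non-removable bottom-of-stack marker; the stack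
  content is thus a counter n (number of Z's). A transition (p, a, z, q, k) reads the input
  letter a (or nothing if a = None), is applicable iff the top of stack is the bottom marker
  (z = True, i.e. n = 0) resp. Z (z = False, n > 0), pops Z (if not the bottom marker),
  pushes k copies of Z and moves to state q.\<close>
type_synonym 'x oc_trans = "nat \<times> 'x option \<times> bool \<times> nat \<times> nat"

inductive oc_run :: "'x oc_trans set \<Rightarrow> nat \<Rightarrow> nat \<Rightarrow> 'x list \<Rightarrow> nat \<Rightarrow> nat \<Rightarrow> bool"
  for \<delta> :: "'x oc_trans set" where
  oc_refl: "oc_run \<delta> q n [] q n"
| oc_step: "\<lbrakk>(p, a, z, q, k) \<in> \<delta>; z = (n = 0);
            oc_run \<delta> q (if n = 0 then k else n - 1 + k) w r m\<rbrakk>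
           \<Longrightarrow> oc_run \<delta> p n (opt_word a @ w) r m"

definition one_counter_language :: "'x set \<Rightarrow> 'x list set \<Rightarrow> bool" where
  "one_counter_language X L \<longleftrightarrow> L \<subseteq> lists X \<and>
     (\<exists>(\<delta> :: 'x oc_trans set) q0 F. finite \<delta> \<and> finite F \<and>
        L = {w. \<exists>q m. q \<in> F \<and> oc_run \<delta> q0 0 w q m})"

text \<open>Transitions (s, a, r, v): from state s, reading a (a letter or \<epsilon> = None),
  go to state r outputting the word v. Output alphabet {t, t^{-1}} is encoded as bool
  (True = t, False = t^{-1}).\<close>
type_synonym ('x, 'y) td_trans = "nat \<times> 'x option \<times> nat \<times> 'y list"

inductive td_run :: "('x, 'y) td_trans set \<Rightarrow> nat \<Rightarrow> 'x list \<Rightarrow> nat \<Rightarrow> 'y list \<Rightarrow> bool"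
  for \<Delta> :: "('x, 'y) td_trans set" where
  td_refl: "td_run \<Delta> s [] s []"
| td_step: "\<lbrakk>(s, a, r, v) \<in> \<Delta>; td_run \<Delta> r u q v'\<rbrakk>
           \<Longrightarrow> td_run \<Delta> s (opt_word a @ u) q (v @ v')"

definition td_image :: "('x, 'y) td_trans set \<Rightarrow> nat \<Rightarrow> nat set \<Rightarrow> 'x list \<Rightarrow> 'y list set" where
  "td_image \<Delta> s0 A u = {v. \<exists>a \<in> A. td_run \<Delta> s0 u a v}"

definition td_domain :: "('x, 'y) td_trans set \<Rightarrow> nat \<Rightarrow> nat set \<Rightarrow> 'x list set" where
  "td_domain \<Delta> s0 A = {u. \<exists>a \<in> A. \<exists>v. td_run \<Delta> s0 u a v}"

definition rational_transducer :: "'x set \<Rightarrow> ('x, 'y) td_trans set \<Rightarrow> nat set \<Rightarrow> bool" where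
  "rational_transducer X \<Delta> A \<longleftrightarrow> finite \<Delta> \<and> finite A \<and>
     (\<forall>(s, a, r, v) \<in> \<Delta>. set_option a \<subseteq> X)"

fun pi_Z :: "bool list \<Rightarrow> int" where
  "pi_Z [] = 0"
| "pi_Z (b # v) = (if b then 1 else -1) + pi_Z v"

definition tau_transducer ::
  "('a, 'b) monoid_scheme \<Rightarrow> 'x set \<Rightarrow> ('x list \<Rightarrow> 'a) \<Rightarrow> ('a \<Rightarrow> int)
     \<Rightarrow> ('x, bool) td_trans set \<Rightarrow> nat \<Rightarrow> nat set \<Rightarrow> bool" where
  "tau_transducer G X \<pi> \<tau> \<Delta> s0 A \<longleftrightarrow> rational_transducer X \<Delta> A
     \<and> \<pi> ` td_domain \<Delta> s0 A = carrier G
     \<and> (\<forall>w \<in> td_domain \<Delta> s0 A. \<forall>v \<in> td_image \<Delta> s0 A w. pi_Z v = \<tau> (\<pi> w))"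

end

theory Submission
  imports Defs "HOL-Library.Countable"
begin

inductive gen_run :: "('s \<times> 'x option \<times> bool \<times> 's \<times> nat) set \<Rightarrow> 's \<Rightarrow> nat \<Rightarrow> 'x list \<Rightarrow> 's \<Rightarrow> nat \<Rightarrow> bool"
  for \<delta> where
  g_refl: "gen_run \<delta> q n [] q n"
| g_step: "\<lbrakk>(p, a, z, q, k) \<in> \<delta>; z = (n = 0);
            gen_run \<delta> q (if n = 0 then k else n - 1 + k) w r m\<rbrakk>
           \<Longrightarrow> gen_run \<delta> p n (opt_word a @ w) r m"

lemma gen_run_trans: "gen_run \<delta> p n w1 q m \<Longrightarrow> gen_run \<delta> q m w2 r k \<Longrightarrow> gen_run \<delta> p n (w1 @ w2) r k"
proof (induction rule: gen_run.induct)
  case (g_refl q n)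
  then show ?case by simp
next
  case (g_step p a z q k n w r m)
  then show ?case using gen_run.g_step[of p a z q k \<delta> n "w @ w2"] by simp
qed

definition enc :: "('s::countable \<times> 'x option \<times> bool \<times> 's \<times> nat) set \<Rightarrow> 'x oc_trans set" where
  "enc \<delta> = (\<lambda>(p,a,z,q,k). (to_nat p, a, z, to_nat q, k)) ` \<delta>"

lemma gen_to_oc: "gen_run \<delta> p n w q m \<Longrightarrow> oc_run (enc \<delta>) (to_nat p) n w (to_nat q) m"
proof (induction rule: gen_run.induct)
  case (g_refl q n)
  then show ?case by (rule oc_refl)
next
  case (g_step p a z q k n w r m)
  have "(to_nat p, a, z, to_nat q, k) \<in> enc \<delta>" using g_step(1) by (force simp: enc_def)
  then show ?case using g_step(2) g_step(4) by (rule oc_step)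
qed

lemma oc_to_gen: "oc_run (enc \<delta>) p' n w q' m \<Longrightarrow> to_nat p = p' \<Longrightarrow> \<exists>q. q' = to_nat q \<and> gen_run \<delta> p n w q m"
proof (induction arbitrary: p rule: oc_run.induct)
  case (oc_refl q n)
  then show ?case by (auto intro: g_refl)
next
  case (oc_step p' a z q' k n w r m)
  obtain p1 q1 where h: "(p1,a,z,q1,k) \<in> \<delta>" "to_nat p1 = p'" "to_nat q1 = q'"
    using oc_step(1) by (auto simp: enc_def)
  have "p1 = p" using h(2) oc_step(5) by (metis to_nat_split)
  obtain q where r: "r = to_nat q" and o: "gen_run \<delta> q1 (if n = 0 then k else n - 1 + k) w q m"
    using oc_step(4)[of q1] h(3) by auto
  have "gen_run \<delta> p n (opt_word a @ w) q m"
    using g_step[OF h(1)[unfolded `p1 = p`] oc_step(2) o] .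
  then show ?case using r by blast
qed

lemma gen_ocl:
  fixes \<delta> :: "('s::countable \<times> 'x option \<times> bool \<times> 's \<times> nat) set"
  assumes "finite \<delta>" "finite F" "L = {w. \<exists>q m. q \<in> F \<and> gen_run \<delta> q0 0 w q m}" "L \<subseteq> lists X"
  shows "one_counter_language X L"
  unfolding one_counter_language_def
proof (intro conjI exI)
  show "L \<subseteq> lists X" by fact
  show "finite (enc \<delta>)" using assms(1) by (simp add: enc_def)
  show "finite (to_nat ` F)" using assms(2) by simp
  show "L = {w. \<exists>q m. q \<in> to_nat ` F \<and> oc_run (enc \<delta>) (to_nat q0) 0 w q m}"
    unfolding assms(3)
  proof (rule Set.set_eqI, rule iffI)
    fix w assume "w \<in> {w. \<exists>q m. q \<in> F \<and> gen_run \<delta> q0 0 w q m}"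
    then obtain q m where "q \<in> F" "gen_run \<delta> q0 0 w q m" by blast
    then have "to_nat q \<in> to_nat ` F" "oc_run (enc \<delta>) (to_nat q0) 0 w (to_nat q) m"
      using gen_to_oc by auto
    then show "w \<in> {w. \<exists>q m. q \<in> to_nat ` F \<and> oc_run (enc \<delta>) (to_nat q0) 0 w q m}"
      by blast
  next
    fix w assume "w \<in> {w. \<exists>q m. q \<in> to_nat ` F \<and> oc_run (enc \<delta>) (to_nat q0) 0 w q m}"
    then obtain q m where "q \<in> F" "oc_run (enc \<delta>) (to_nat q0) 0 w (to_nat q) m" by auto
    then show "w \<in> {w. \<exists>q m. q \<in> F \<and> gen_run \<delta> q0 0 w q m}"
      using oc_to_gen[of \<delta> "to_nat q0" 0 w "to_nat q" m q0] by auto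
  qed
qed

definition uaut :: "'x oc_trans set \<Rightarrow> 'x oc_trans set \<Rightarrow> nat \<Rightarrow> nat \<Rightarrow> ((nat + nat) option \<times> 'x option \<times> bool \<times> (nat + nat) option \<times> nat) set" where
  "uaut \<delta>1 \<delta>2 q1 q2 = {(None, None, True, Some (Inl q1), 0), (None, None, True, Some (Inr q2), 0)}
     \<union> (\<lambda>(p,a,z,q,k). (Some (Inl p), a, z, Some (Inl q), k)) ` \<delta>1
     \<union> (\<lambda>(p,a,z,q,k). (Some (Inr p), a, z, Some (Inr q), k)) ` \<delta>2"

lemma uaut_None: "(None, a, z, q, k) \<in> uaut \<delta>1 \<delta>2 q1 q2 \<Longrightarrow> a = None \<and> z \<and> k = 0 \<and> (q = Some (Inl q1) \<or> q = Some (Inr q2))"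
  unfolding uaut_def by auto
lemma uaut_Inl: "(Some (Inl p), a, z, q, k) \<in> uaut \<delta>1 \<delta>2 q1 q2 \<Longrightarrow> \<exists>q'. q = Some (Inl q') \<and> (p,a,z,q',k) \<in> \<delta>1"
  unfolding uaut_def by auto
lemma uaut_Inr: "(Some (Inr p), a, z, q, k) \<in> uaut \<delta>1 \<delta>2 q1 q2 \<Longrightarrow> \<exists>q'. q = Some (Inr q') \<and> (p,a,z,q',k) \<in> \<delta>2"
  unfolding uaut_def by auto
lemma u_l1: "oc_run \<delta>1 p n w q m \<Longrightarrow> gen_run (uaut \<delta>1 \<delta>2 q1 q2) (Some (Inl p)) n w (Some (Inl q)) m"
proof (induction rule: oc_run.induct)
  case (oc_refl q n) then show ?case by (rule g_refl)
next
  case (oc_step p a z q k n w r m)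
  have "(Some (Inl p), a, z, Some (Inl q), k) \<in> uaut \<delta>1 \<delta>2 q1 q2" unfolding uaut_def
    by (rule UnI1, rule UnI2, rule image_eqI[OF _ oc_step(1)]) simp
  then show ?case using oc_step(2) oc_step(4) by (rule g_step)
qed

lemma u_r1: "oc_run \<delta>2 p n w q m \<Longrightarrow> gen_run (uaut \<delta>1 \<delta>2 q1 q2) (Some (Inr p)) n w (Some (Inr q)) m"
proof (induction rule: oc_run.induct)
  case (oc_refl q n) then show ?case by (rule g_refl)
next
  case (oc_step p a z q k n w r m)
  have "(Some (Inr p), a, z, Some (Inr q), k) \<in> uaut \<delta>1 \<delta>2 q1 q2" unfolding uaut_def
    by (rule UnI2, rule image_eqI[OF _ oc_step(1)]) simp
  then show ?case using oc_step(2) oc_step(4) by (rule g_step)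
qed

lemma u_l2: "gen_run (uaut \<delta>1 \<delta>2 q1 q2) p' n w q' m \<Longrightarrow> p' = Some (Inl p) \<Longrightarrow> \<exists>q. q' = Some (Inl q) \<and> oc_run \<delta>1 p n w q m"
proof (induction arbitrary: p rule: gen_run.induct)
  case (g_refl q n) then show ?case by (auto intro: oc_refl)
next
  case (g_step p' a z q' k n w r m)
  have "(Some (Inl p), a, z, q', k) \<in> uaut \<delta>1 \<delta>2 q1 q2" using g_step(1,5) by simp
  then obtain q1' where h: "q' = Some (Inl q1')" "(p,a,z,q1',k) \<in> \<delta>1"
    using uaut_Inl by blast
  obtain q where r: "r = Some (Inl q)" and o: "oc_run \<delta>1 q1' (if n = 0 then k else n - 1 + k) w q m"
    using g_step(4)[OF h(1)] by blast
  have "oc_run \<delta>1 p n (opt_word a @ w) q m" by (rule oc_step[OF h(2) g_step(2) o])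
  then show ?case using r by blast
qed

lemma u_r2: "gen_run (uaut \<delta>1 \<delta>2 q1 q2) p' n w q' m \<Longrightarrow> p' = Some (Inr p) \<Longrightarrow> \<exists>q. q' = Some (Inr q) \<and> oc_run \<delta>2 p n w q m"
proof (induction arbitrary: p rule: gen_run.induct)
  case (g_refl q n) then show ?case by (auto intro: oc_refl)
next
  case (g_step p' a z q' k n w r m)
  have "(Some (Inr p), a, z, q', k) \<in> uaut \<delta>1 \<delta>2 q1 q2" using g_step(1,5) by simp
  then obtain q1' where h: "q' = Some (Inr q1')" "(p,a,z,q1',k) \<in> \<delta>2"
    using uaut_Inr by blast
  obtain q where r: "r = Some (Inr q)" and o: "oc_run \<delta>2 q1' (if n = 0 then k else n - 1 + k) w q m"
    using g_step(4)[OF h(1)] by blast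
  have "oc_run \<delta>2 p n (opt_word a @ w) q m" by (rule oc_step[OF h(2) g_step(2) o])
  then show ?case using r by blast
qed

lemma ocl_union:
  assumes "one_counter_language X L1" "one_counter_language X L2"
  shows "one_counter_language X (L1 \<union> L2)"
proof -
  obtain \<delta>1 q1 F1 where 1: "L1 \<subseteq> lists X" "finite \<delta>1" "finite F1"
     "L1 = {w. \<exists>q m. q \<in> F1 \<and> oc_run \<delta>1 q1 0 w q m}"
    using assms(1) unfolding one_counter_language_def by (elim conjE exE) simp
  obtain \<delta>2 q2 F2 where 2: "L2 \<subseteq> lists X" "finite \<delta>2" "finite F2"
     "L2 = {w. \<exists>q m. q \<in> F2 \<and> oc_run \<delta>2 q2 0 w q m}"
    using assms(2) unfolding one_counter_language_def by (elim conjE exE) simp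
  let ?d = "uaut \<delta>1 \<delta>2 q1 q2"
  let ?F = "(\<lambda>q. Some (Inl q)) ` F1 \<union> (\<lambda>q. Some (Inr q)) ` F2"
  show ?thesis
  proof (rule gen_ocl[of ?d ?F _ None])
    show "finite ?d" using 1 2 by (simp add: uaut_def)
    show "finite ?F" using 1 2 by simp
    show "L1 \<union> L2 \<subseteq> lists X" using 1 2 by simp
    show "L1 \<union> L2 = {w. \<exists>q m. q \<in> ?F \<and> gen_run ?d None 0 w q m}"
    proof (rule Set.set_eqI, rule iffI)
      fix w assume "w \<in> L1 \<union> L2"
      then show "w \<in> {w. \<exists>q m. q \<in> ?F \<and> gen_run ?d None 0 w q m}"
      proof
        assume "w \<in> L1"
        then obtain q m where q: "q \<in> F1" and r: "oc_run \<delta>1 q1 0 w q m" using 1 by auto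
        have "gen_run ?d (Some (Inl q1)) 0 w (Some (Inl q)) m" using r by (rule u_l1)
        moreover have "(None, None, True, Some (Inl q1), 0) \<in> ?d" by (simp add: uaut_def)
        ultimately have "gen_run ?d None 0 (opt_word None @ w) (Some (Inl q)) m"
          using g_step[of None None True "Some (Inl q1)" 0 ?d 0 w "Some (Inl q)" m] by simp
        then have "gen_run ?d None 0 w (Some (Inl q)) m" by simp
        moreover have "Some (Inl q) \<in> ?F" using q by simp
        ultimately show ?thesis by blast
      next
        assume "w \<in> L2"
        then obtain q m where q: "q \<in> F2" and r: "oc_run \<delta>2 q2 0 w q m" using 2 by auto
        have "gen_run ?d (Some (Inr q2)) 0 w (Some (Inr q)) m" using r by (rule u_r1)
        moreover have "(None, None, True, Some (Inr q2), 0) \<in> ?d" by (simp add: uaut_def)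
        ultimately have "gen_run ?d None 0 (opt_word None @ w) (Some (Inr q)) m"
          using g_step[of None None True "Some (Inr q2)" 0 ?d 0 w "Some (Inr q)" m] by simp
        then have "gen_run ?d None 0 w (Some (Inr q)) m" by simp
        moreover have "Some (Inr q) \<in> ?F" using q by simp
        ultimately show ?thesis by blast
      qed
    next
      fix w assume "w \<in> {w. \<exists>q m. q \<in> ?F \<and> gen_run ?d None 0 w q m}"
      then obtain q m where q: "q \<in> ?F" and r: "gen_run ?d None 0 w q m" by blast
      from r show "w \<in> L1 \<union> L2"
      proof cases
        case g_refl then show ?thesis using q by auto
      next
        case (g_step a z q' k w')
        from uaut_None[OF g_step(2)] have c: "a = None" "z" "k = 0" "q' = Some (Inl q1) \<or> q' = Some (Inr q2)"
          by auto
        have r': "gen_run ?d q' 0 w' q m" using g_step(4) c(3) by simp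
        have w: "w = w'" using g_step(1) c(1) by simp
        show ?thesis
        proof (cases "q' = Some (Inl q1)")
          case True
          then obtain qq where "q = Some (Inl qq)" "oc_run \<delta>1 q1 0 w' qq m"
            using u_l2[OF r'] by blast
          moreover from this(1) q have "qq \<in> F1" by auto
          ultimately have "w' \<in> L1" unfolding 1(4) by blast
          then show ?thesis using w by simp
        next
          case False
          then have "q' = Some (Inr q2)" using c by auto
          then obtain qq where "q = Some (Inr qq)" "oc_run \<delta>2 q2 0 w' qq m"
            using u_r2[OF r'] by blast
          moreover from this(1) q have "qq \<in> F2" by auto
          ultimately have "w' \<in> L2" unfolding 2(4) by blast
          then show ?thesis using w by simp
        qed
      qed
    qed
  qed
qed


definition stp :: "bool \<Rightarrow> bool \<Rightarrow> bool \<Rightarrow> bool \<times> nat" where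
  "stp b x z = (if b = x then (b, if z then 1 else 2) else (if z then (x, 1) else (b, 0)))"

definition val :: "bool \<Rightarrow> nat \<Rightarrow> int" where
  "val b n = (if b then int n else - int n)"

lemma stp_val: "stp b x (n = 0) = (b', k) \<Longrightarrow>
   val b' (if n = 0 then k else n - 1 + k) = val b n + (if x then 1 else -1)"
  by (cases b; cases x; cases "n = 0") (auto simp: stp_def val_def)

lemma pi_Z_append: "pi_Z (u @ v) = pi_Z u + pi_Z v"
  by (induction u) auto

definition Rs :: "('x, bool) td_trans set \<Rightarrow> nat set" where
  "Rs \<Delta> = (\<lambda>(s,a,r,v). r) ` \<Delta>"
definition Outs :: "('x, bool) td_trans set \<Rightarrow> bool list set" where
  "Outs \<Delta> = (\<lambda>(s,a,r,v). v) ` \<Delta>"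
definition Us :: "('x, bool) td_trans set \<Rightarrow> bool list set" where
  "Us \<Delta> = (\<Union>v\<in>Outs \<Delta>. (\<lambda>i. drop i v) ` {..length v})"

type_synonym mst = "(nat \<times> bool list \<times> bool) option"

definition maut :: "('x, bool) td_trans set \<Rightarrow> nat set \<Rightarrow> (mst \<times> 'x option \<times> bool \<times> mst \<times> nat) set" where
  "maut \<Delta> A =
     (\<lambda>((s,a,r,v),b,z). (Some (s,[],b), a, z, Some (r,v,b), if z then 0 else 1)) ` (\<Delta> \<times> UNIV \<times> UNIV)
   \<union> (\<lambda>(r,u,b,z). (Some (r,u,b), None, z, Some (r, tl u, fst (stp b (hd u) z)), snd (stp b (hd u) z)))
        ` (Rs \<Delta> \<times> (Us \<Delta> - {[]}) \<times> UNIV \<times> UNIV)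
   \<union> (\<lambda>s. (Some (s,[],True), None, False, None, 1)) ` A"

lemma finite_maut: "finite \<Delta> \<Longrightarrow> finite A \<Longrightarrow> finite (maut \<Delta> A)"
  unfolding maut_def Rs_def Us_def Outs_def by auto

lemma Us_tl: "x # u \<in> Us \<Delta> \<Longrightarrow> u \<in> Us \<Delta>"
proof -
  assume "x # u \<in> Us \<Delta>"
  then obtain v i where v: "v \<in> Outs \<Delta>" "i \<le> length v" "drop i v = x # u" unfolding Us_def by auto
  then have "drop (Suc i) v = u" by (metis drop_Suc list.sel(3) tl_drop)
  moreover have "Suc i \<le> length v" using v(3) by (metis Suc_leI drop_eq_Nil2 leI list.distinct(1))
  ultimately show "u \<in> Us \<Delta>" using v(1) unfolding Us_def by blast
qed

lemma Us_out: "(s,a,r,v) \<in> \<Delta> \<Longrightarrow> v \<in> Us \<Delta>"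
  unfolding Us_def Outs_def by (rule UN_I[of v], force, rule image_eqI[of _ _ 0]) auto

lemma Rs_out: "(s,a,r,v) \<in> \<Delta> \<Longrightarrow> r \<in> Rs \<Delta>"
  unfolding Rs_def by force

lemma proc_run: "r \<in> Rs \<Delta> \<Longrightarrow> u \<in> Us \<Delta> \<Longrightarrow>
   \<exists>b' n'. gen_run (maut \<Delta> A) (Some (r,u,b)) n [] (Some (r,[],b')) n' \<and> val b' n' = val b n + pi_Z u"
proof (induction u arbitrary: b n)
  case Nil
  then show ?case using g_refl by fastforce
next
  case (Cons x u)
  obtain b1 k where sk: "stp b x (n = 0) = (b1, k)" by (cases "stp b x (n = 0)")
  define n1 where "n1 = (if n = 0 then k else n - 1 + k)"
  have tr: "(Some (r, x # u, b), None, n = 0, Some (r, u, b1), k) \<in> maut \<Delta> A"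
    unfolding maut_def
    apply (rule UnI1, rule UnI2)
    apply (rule image_eqI[of _ _ "(r, x # u, b, n = 0)"])
    using sk Cons.prems by auto
  obtain b' n' where ih: "gen_run (maut \<Delta> A) (Some (r,u,b1)) n1 [] (Some (r,[],b')) n'"
     "val b' n' = val b1 n1 + pi_Z u"
    using Cons.IH[OF Cons.prems(1) Us_tl[OF Cons.prems(2)], of b1 n1] by blast
  have "gen_run (maut \<Delta> A) (Some (r, x # u, b)) n (opt_word None @ []) (Some (r,[],b')) n'"
    using g_step[OF tr refl ih(1)[unfolded n1_def]] .
  then have "gen_run (maut \<Delta> A) (Some (r, x # u, b)) n [] (Some (r,[],b')) n'" by simp
  moreover have "val b' n' = val b n + pi_Z (x # u)"
    using ih(2) stp_val[OF sk] unfolding n1_def by simp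
  ultimately show ?case by blast
qed

lemma complete_run: "td_run \<Delta> s w q v \<Longrightarrow>
   \<exists>b' n'. gen_run (maut \<Delta> A) (Some (s,[],b)) n w (Some (q,[],b')) n' \<and> val b' n' = val b n + pi_Z v"
proof (induction arbitrary: b n rule: td_run.induct)
  case (td_refl s)
  then show ?case using g_refl by fastforce
next
  case (td_step s a r v u q v')
  have tr: "(Some (s,[],b), a, n = 0, Some (r,v,b), if n = 0 then 0 else 1) \<in> maut \<Delta> A"
    unfolding maut_def
    apply (rule UnI1, rule UnI1)
    apply (rule image_eqI[of _ _ "((s,a,r,v), b, n = 0)"])
    using td_step.hyps(1) by auto
  obtain b1 n1 where p: "gen_run (maut \<Delta> A) (Some (r,v,b)) n [] (Some (r,[],b1)) n1"
     "val b1 n1 = val b n + pi_Z v"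
    using proc_run[OF Rs_out[OF td_step.hyps(1)] Us_out[OF td_step.hyps(1)], of A b n] by blast
  obtain b' n' where ih: "gen_run (maut \<Delta> A) (Some (r,[],b1)) n1 u (Some (q,[],b')) n'"
     "val b' n' = val b1 n1 + pi_Z v'"
    using td_step.IH[of b1 n1] by blast
  have "gen_run (maut \<Delta> A) (Some (r,v,b)) n ([] @ u) (Some (q,[],b')) n'"
    by (rule gen_run_trans[OF p(1) ih(1)])
  moreover have e: "(if n = 0 then (if n = 0 then 0 else 1) else n - 1 + (if n = 0 then 0 else 1)) = n"
    by simp
  ultimately have "gen_run (maut \<Delta> A) (Some (r,v,b)) (if n = 0 then (if n = 0 then 0 else 1) else n - 1 + (if n = 0 then 0 else 1)) u (Some (q,[],b')) n'"
    by simp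
  then have "gen_run (maut \<Delta> A) (Some (s,[],b)) n (opt_word a @ u) (Some (q,[],b')) n'"
    using g_step[OF tr refl] by blast
  moreover have "val b' n' = val b n + pi_Z (v @ v')"
    using ih(2) p(2) by (simp add: pi_Z_append)
  ultimately show ?case by blast
qed

lemma maut_None: "(None, a, z, q, k) \<notin> maut \<Delta> A"
  unfolding maut_def by auto

lemma none_run: "gen_run (maut \<Delta> A) None n w q m \<Longrightarrow> w = []"
  by (cases rule: gen_run.cases) (auto simp: maut_None)

lemma maut_cases:
  assumes "(Some (s,u,b), a, z, q, k) \<in> maut \<Delta> A"
  shows "(u = [] \<and> (\<exists>r v. (s,a,r,v) \<in> \<Delta> \<and> q = Some (r,v,b) \<and> k = (if z then 0 else 1)))
       \<or> (u \<noteq> [] \<and> a = None \<and> q = Some (s, tl u, fst (stp b (hd u) z)) \<and> k = snd (stp b (hd u) z))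
       \<or> (u = [] \<and> b \<and> s \<in> A \<and> a = None \<and> \<not> z \<and> q = None)"
  using assms unfolding maut_def by auto

lemma sound_run: "gen_run (maut \<Delta> A) p n w q m \<Longrightarrow> q = None \<Longrightarrow> p = Some (s,u,b) \<Longrightarrow>
   \<exists>a\<in>A. \<exists>v. td_run \<Delta> s w a v \<and> val b n + pi_Z u + pi_Z v > 0"
proof (induction arbitrary: s u b rule: gen_run.induct)
  case (g_refl q n)
  then show ?case by simp
next
  case (g_step p a z q' k n w r m)
  have mem: "(Some (s,u,b), a, z, q', k) \<in> maut \<Delta> A" using g_step(1,6) by simp
  from maut_cases[OF mem] show ?case
  proof (elim disjE conjE exE)
    fix r' v assume h: "u = []" "(s, a, r', v) \<in> \<Delta>" "q' = Some (r', v, b)" "k = (if z then 0 else 1)"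
    have "(if n = 0 then k else n - 1 + k) = n" using h(4) g_step(2) by auto
    then obtain a' v' where a': "a' \<in> A" "td_run \<Delta> r' w a' v'" "val b n + pi_Z v + pi_Z v' > 0"
      using g_step(4)[OF g_step(5) h(3)] by auto
    have "td_run \<Delta> s (opt_word a @ w) a' (v @ v')" by (rule td_step[OF h(2) a'(2)])
    moreover have "val b n + pi_Z u + pi_Z (v @ v') > 0" using a'(3) h(1) by (simp add: pi_Z_append)
    ultimately show ?thesis using a'(1) by blast
  next
    assume h: "u \<noteq> []" "a = None" "q' = Some (s, tl u, fst (stp b (hd u) z))" "k = snd (stp b (hd u) z)"
    obtain a' v' where a': "a' \<in> A" "td_run \<Delta> s w a' v'"
       "val (fst (stp b (hd u) z)) (if n = 0 then k else n - 1 + k) + pi_Z (tl u) + pi_Z v' > 0"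
      using g_step(4)[OF g_step(5) h(3)] by blast
    have sv: "val (fst (stp b (hd u) z)) (if n = 0 then k else n - 1 + k) = val b n + (if hd u then 1 else -1)"
      using stp_val[of b "hd u" n "fst (stp b (hd u) z)" k] h(4) g_step(2) by simp
    have "pi_Z u = (if hd u then 1 else -1) + pi_Z (tl u)" using h(1) by (cases u) auto
    then have "val b n + pi_Z u + pi_Z v' > 0" using a'(3) sv by simp
    moreover have "td_run \<Delta> s (opt_word a @ w) a' v'" using a'(2) h(2) by simp
    ultimately show ?thesis using a'(1) by blast
  next
    assume h: "u = []" "b" "s \<in> A" "a = None" "\<not> z" "q' = None"
    have "w = []" using g_step(3) h(6) none_run by blast
    have "val b n + pi_Z u + pi_Z [] > 0" using h g_step(2) by (auto simp: val_def)
    moreover have "td_run \<Delta> s (opt_word a @ w) s []" using h(4) `w = []` td_refl[of \<Delta> s] by simp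
    ultimately show ?thesis using h(3) by blast
  qed
qed

lemma td_lists: "td_run \<Delta> s w q v \<Longrightarrow> rational_transducer X \<Delta> A \<Longrightarrow> w \<in> lists X"
proof (induction rule: td_run.induct)
  case (td_refl s) then show ?case by simp
next
  case (td_step s a r v u q v')
  have "set_option a \<subseteq> X" using td_step(1,4) unfolding rational_transducer_def by auto
  then have "opt_word a \<in> lists X" by (cases a) auto
  then show ?case using td_step by simp
qed

lemma tau_lang:
  assumes "rational_transducer X \<Delta> A"
  shows "one_counter_language X {w. \<exists>a\<in>A. \<exists>v. td_run \<Delta> s0 w a v \<and> pi_Z v > 0}"
proof (rule gen_ocl[of "maut \<Delta> A" "{None}" _ "Some (s0, [], True)"])
  show "finite (maut \<Delta> A)" using assms finite_maut unfolding rational_transducer_def by blast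
  show "finite {None :: mst}" by simp
  show "{w. \<exists>a\<in>A. \<exists>v. td_run \<Delta> s0 w a v \<and> pi_Z v > 0} \<subseteq> lists X"
    using td_lists[OF _ assms] by blast
  show "{w. \<exists>a\<in>A. \<exists>v. td_run \<Delta> s0 w a v \<and> pi_Z v > 0} =
        {w. \<exists>q m. q \<in> {None} \<and> gen_run (maut \<Delta> A) (Some (s0, [], True)) 0 w q m}"
  proof (rule Set.set_eqI, rule iffI)
    fix w assume "w \<in> {w. \<exists>a\<in>A. \<exists>v. td_run \<Delta> s0 w a v \<and> pi_Z v > 0}"
    then obtain a v where av: "a \<in> A" "td_run \<Delta> s0 w a v" "pi_Z v > 0" by blast
    obtain b' n' where r: "gen_run (maut \<Delta> A) (Some (s0,[],True)) 0 w (Some (a,[],b')) n'"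
      "val b' n' = val True 0 + pi_Z v"
      using complete_run[OF av(2), of A True 0] by blast
    have bn: "b'" "n' \<noteq> 0" using r(2) av(3) by (auto simp: val_def split: if_splits)
    have tr: "(Some (a,[],True), None, False, None, 1) \<in> maut \<Delta> A"
      unfolding maut_def using av(1) by blast
    have "gen_run (maut \<Delta> A) (Some (a,[],True)) n' (opt_word None @ []) None
       (if n' = 0 then 1 else n' - 1 + 1)"
      using g_step[OF tr _ g_refl] bn by simp
    then have "gen_run (maut \<Delta> A) (Some (a,[],b')) n' [] None n'" using bn by simp
    from gen_run_trans[OF r(1) this] have "gen_run (maut \<Delta> A) (Some (s0,[],True)) 0 w None n'"
      by simp
    then show "w \<in> {w. \<exists>q m. q \<in> {None} \<and> gen_run (maut \<Delta> A) (Some (s0, [], True)) 0 w q m}"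
      by blast
  next
    fix w assume "w \<in> {w. \<exists>q m. q \<in> {None} \<and> gen_run (maut \<Delta> A) (Some (s0, [], True)) 0 w q m}"
    then obtain m where "gen_run (maut \<Delta> A) (Some (s0, [], True)) 0 w None m" by blast
    from sound_run[OF this refl refl] show "w \<in> {w. \<exists>a\<in>A. \<exists>v. td_run \<Delta> s0 w a v \<and> pi_Z v > 0}"
      by (simp add: val_def)
  qed
qed


theorem proposition5p6:
  fixes G :: "('a, 'b) monoid_scheme" and X :: "'x set" and \<pi> :: "'x list \<Rightarrow> 'a"
    and \<tau> :: "'a \<Rightarrow> int"
  assumes "group G"
    and "finite_gen_set G X \<pi>"
    and "ordering_quasi_morphism G \<tau>"
    and "\<exists>\<Delta> s0 A. tau_transducer G X \<pi> \<tau> \<Delta> s0 A"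
  shows "pos_cone_rel G (qm_kernel G \<tau>) {g \<in> carrier G. \<tau> g > 0}
         \<and> (\<exists>L. one_counter_language X L \<and> \<pi> ` L = {g \<in> carrier G. \<tau> g > 0})
         \<and> (\<forall>L_C. one_counter_language X L_C
                  \<and> pos_cone (G\<lparr>carrier := qm_kernel G \<tau>\<rparr>) (\<pi> ` L_C)
                \<longrightarrow> (\<exists>L. one_counter_language X L
                         \<and> \<pi> ` L = {g \<in> carrier G. \<tau> g > 0} \<union> \<pi> ` L_C)
                    \<and> pos_cone G ({g \<in> carrier G. \<tau> g > 0} \<union> \<pi> ` L_C))"
proof -
  interpret G: group G by fact
  define P where "P = {g \<in> carrier G. \<tau> g > 0}"
  define C where "C = qm_kernel G \<tau>"
  have Cdef: "\<And>g. g \<in> C \<longleftrightarrow> g \<in> carrier G \<and> \<tau> g = 0" by (simp add: C_def qm_kernel_def)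
  have sg: "subgroup C G" using assms(3) unfolding ordering_quasi_morphism_def C_def qm_kernel_def by blast
  have tinv: "\<And>g. g \<in> carrier G \<Longrightarrow> \<tau> (inv\<^bsub>G\<^esub> g) = - \<tau> g"
    using assms(3) unfolding ordering_quasi_morphism_def by blast
  have tqm: "\<And>g h. g \<in> carrier G \<Longrightarrow> h \<in> carrier G \<Longrightarrow> \<tau> g + \<tau> h + \<tau> (inv\<^bsub>G\<^esub> (g \<otimes>\<^bsub>G\<^esub> h)) \<le> 1"
    using assms(3) unfolding ordering_quasi_morphism_def by blast
  have tmul: "\<And>g h. g \<in> carrier G \<Longrightarrow> h \<in> carrier G \<Longrightarrow> \<tau> (g \<otimes>\<^bsub>G\<^esub> h) \<ge> \<tau> g + \<tau> h - 1"
  proof -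
    fix g h assume gh: "g \<in> carrier G" "h \<in> carrier G"
    have "\<tau> (inv\<^bsub>G\<^esub> (g \<otimes>\<^bsub>G\<^esub> h)) = - \<tau> (g \<otimes>\<^bsub>G\<^esub> h)" using tinv gh by simp
    then show "\<tau> (g \<otimes>\<^bsub>G\<^esub> h) \<ge> \<tau> g + \<tau> h - 1" using tqm[OF gh] by linarith
  qed
  have t1: "\<tau> \<one>\<^bsub>G\<^esub> = 0" using subgroup.one_closed[OF sg] Cdef by blast
  have Pdef: "\<And>g. g \<in> P \<longleftrightarrow> g \<in> carrier G \<and> \<tau> g > 0" by (simp add: P_def)
  have invP: "\<And>g. g \<in> (\<lambda>x. inv\<^bsub>G\<^esub> x) ` P \<longleftrightarrow> g \<in> carrier G \<and> \<tau> g < 0"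
  proof
    fix g assume "g \<in> (\<lambda>x. inv\<^bsub>G\<^esub> x) ` P"
    then obtain y where "y \<in> P" "g = inv\<^bsub>G\<^esub> y" by blast
    then show "g \<in> carrier G \<and> \<tau> g < 0" using Pdef tinv by auto
  next
    fix g assume g: "g \<in> carrier G \<and> \<tau> g < 0"
    then have "inv\<^bsub>G\<^esub> g \<in> P" using Pdef tinv by auto
    moreover have "g = inv\<^bsub>G\<^esub> (inv\<^bsub>G\<^esub> g)" using g by simp
    ultimately show "g \<in> (\<lambda>x. inv\<^bsub>G\<^esub> x) ` P" by blast
  qed
  have part1: "pos_cone_rel G C P"
    unfolding pos_cone_rel_def
  proof (intro conjI)
    show "P \<subseteq> carrier G" using Pdef by blast
    show "\<forall>a\<in>P. \<forall>b\<in>P. a \<otimes>\<^bsub>G\<^esub> b \<in> P"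
    proof (intro ballI)
      fix a b assume "a \<in> P" "b \<in> P"
      then show "a \<otimes>\<^bsub>G\<^esub> b \<in> P" using tmul[of a b] Pdef by auto
    qed
    show "P \<inter> C = {}" using Pdef Cdef by auto
    show "P \<inter> (\<lambda>x. inv\<^bsub>G\<^esub> x) ` P = {}" using Pdef invP tinv by fastforce
    show "C \<inter> (\<lambda>x. inv\<^bsub>G\<^esub> x) ` P = {}" using Cdef Pdef invP tinv by fastforce
    show "carrier G = P \<union> C \<union> (\<lambda>x. inv\<^bsub>G\<^esub> x) ` P"
    proof (rule Set.set_eqI)
      fix g show "g \<in> carrier G \<longleftrightarrow> g \<in> P \<union> C \<union> (\<lambda>x. inv\<^bsub>G\<^esub> x) ` P"
        using Pdef Cdef invP by (cases "\<tau> g > 0"; cases "\<tau> g = 0") auto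
    qed
  qed
  obtain \<Delta> s0 A where T: "tau_transducer G X \<pi> \<tau> \<Delta> s0 A" using assms(4) by blast
  have rt: "rational_transducer X \<Delta> A" and dom: "\<pi> ` td_domain \<Delta> s0 A = carrier G"
    and img: "\<And>w v. w \<in> td_domain \<Delta> s0 A \<Longrightarrow> v \<in> td_image \<Delta> s0 A w \<Longrightarrow> pi_Z v = \<tau> (\<pi> w)"
    using T unfolding tau_transducer_def by blast+
  have fg: "\<And>w. w \<in> lists X \<Longrightarrow> \<pi> w \<in> carrier G" using assms(2) unfolding finite_gen_set_def by blast
  define L where "L = {w. \<exists>a\<in>A. \<exists>v. td_run \<Delta> s0 w a v \<and> pi_Z v > 0}"
  have ocL: "one_counter_language X L" unfolding L_def by (rule tau_lang[OF rt])
  have imL: "\<pi> ` L = P"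
  proof (rule Set.set_eqI, rule iffI)
    fix g assume "g \<in> \<pi> ` L"
    then obtain w a v where w: "g = \<pi> w" "a \<in> A" "td_run \<Delta> s0 w a v" "pi_Z v > 0"
      unfolding L_def by blast
    have "w \<in> td_domain \<Delta> s0 A" "v \<in> td_image \<Delta> s0 A w"
      using w unfolding td_domain_def td_image_def by blast+
    then have "pi_Z v = \<tau> g" using img w(1) by simp
    moreover have "g \<in> carrier G" using fg td_lists[OF w(3) rt] w(1) by simp
    ultimately show "g \<in> P" using w(4) Pdef by simp
  next
    fix g assume g: "g \<in> P"
    then have "g \<in> \<pi> ` td_domain \<Delta> s0 A" using dom Pdef by simp
    then obtain w where w: "w \<in> td_domain \<Delta> s0 A" "g = \<pi> w" by blast
    then obtain a v where av: "a \<in> A" "td_run \<Delta> s0 w a v" unfolding td_domain_def by blast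
    have "v \<in> td_image \<Delta> s0 A w" using av unfolding td_image_def by blast
    then have "pi_Z v = \<tau> g" using img w by simp
    then have "pi_Z v > 0" using g Pdef by simp
    then have "w \<in> L" using av unfolding L_def by blast
    then show "g \<in> \<pi> ` L" using w(2) by blast
  qed
  have part3: "\<forall>L_C. one_counter_language X L_C
                  \<and> pos_cone (G\<lparr>carrier := C\<rparr>) (\<pi> ` L_C)
                \<longrightarrow> (\<exists>L. one_counter_language X L
                         \<and> \<pi> ` L = P \<union> \<pi> ` L_C)
                    \<and> pos_cone G (P \<union> \<pi> ` L_C)"
  proof (intro allI impI conjI)
    fix L_C assume h: "one_counter_language X L_C \<and> pos_cone (G\<lparr>carrier := C\<rparr>) (\<pi> ` L_C)"
    show "\<exists>L. one_counter_language X L \<and> \<pi> ` L = P \<union> \<pi> ` L_C"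
      using ocl_union[OF ocL, of L_C] h imL by (intro exI[of _ "L \<union> L_C"]) auto
    define Q where "Q = \<pi> ` L_C"
    have pc: "pos_cone_rel (G\<lparr>carrier := C\<rparr>) {\<one>\<^bsub>G\<^esub>} Q" using h unfolding pos_cone_def Q_def by simp
    have QC: "Q \<subseteq> C" using pc unfolding pos_cone_rel_def by simp
    have invH: "\<And>x. x \<in> Q \<Longrightarrow> inv\<^bsub>G\<lparr>carrier := C\<rparr>\<^esub> x = inv\<^bsub>G\<^esub> x"
      using G.m_inv_consistent[OF sg] QC by blast
    have invQ: "(\<lambda>x. inv\<^bsub>G\<lparr>carrier := C\<rparr>\<^esub> x) ` Q = (\<lambda>x. inv\<^bsub>G\<^esub> x) ` Q"
      using invH by (intro image_cong) auto
    have Qmul: "\<forall>a\<in>Q. \<forall>b\<in>Q. a \<otimes>\<^bsub>G\<^esub> b \<in> Q" using pc unfolding pos_cone_rel_def by simp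
    have Q1: "\<one>\<^bsub>G\<^esub> \<notin> Q" using pc unfolding pos_cone_rel_def by auto
    have QiQ: "Q \<inter> (\<lambda>x. inv\<^bsub>G\<^esub> x) ` Q = {}" using pc invQ unfolding pos_cone_rel_def by simp
    have Ceq: "C = Q \<union> {\<one>\<^bsub>G\<^esub>} \<union> (\<lambda>x. inv\<^bsub>G\<^esub> x) ` Q" using pc invQ unfolding pos_cone_rel_def by simp
    have Qc: "\<And>q. q \<in> Q \<Longrightarrow> q \<in> carrier G \<and> \<tau> q = 0" using QC Cdef by blast
    have iQc: "\<And>q. q \<in> Q \<Longrightarrow> inv\<^bsub>G\<^esub> q \<in> carrier G \<and> \<tau> (inv\<^bsub>G\<^esub> q) = 0" using Qc tinv by simp
    have Pc: "\<And>p. p \<in> P \<Longrightarrow> p \<in> carrier G \<and> \<tau> p > 0" using Pdef by blast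
    show "pos_cone G (P \<union> Q)"
      unfolding pos_cone_def pos_cone_rel_def
    proof (intro conjI)
      show "P \<union> Q \<subseteq> carrier G" using Pc Qc by blast
      show "\<forall>a\<in>P \<union> Q. \<forall>b\<in>P \<union> Q. a \<otimes>\<^bsub>G\<^esub> b \<in> P \<union> Q"
      proof (intro ballI)
        fix a b assume a: "a \<in> P \<union> Q" and b: "b \<in> P \<union> Q"
        show "a \<otimes>\<^bsub>G\<^esub> b \<in> P \<union> Q"
        proof (cases "a \<in> P")
          case aP: True
          show ?thesis
          proof (cases "b \<in> P")
            case True
            then show ?thesis using aP part1 unfolding pos_cone_rel_def by blast
          next
            case False
            then have bQ: "b \<in> Q" using b by blast
            have ac: "a \<in> carrier G" "\<tau> a > 0" using Pc aP by auto
            have bc: "b \<in> carrier G" "\<tau> b = 0" using Qc bQ by auto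
            have ge: "\<tau> (a \<otimes>\<^bsub>G\<^esub> b) \<ge> 0" using tmul[OF ac(1) bc(1)] ac bc by linarith
            have "\<tau> (a \<otimes>\<^bsub>G\<^esub> b) \<noteq> 0"
            proof
              assume z: "\<tau> (a \<otimes>\<^bsub>G\<^esub> b) = 0"
              have "a \<otimes>\<^bsub>G\<^esub> b \<in> C" using z ac bc Cdef by simp
              moreover have "inv\<^bsub>G\<^esub> b \<in> C" using iQc bQ Cdef by simp
              ultimately have "a \<otimes>\<^bsub>G\<^esub> b \<otimes>\<^bsub>G\<^esub> inv\<^bsub>G\<^esub> b \<in> C" using subgroup.m_closed[OF sg] by blast
              then have "a \<in> C" using ac bc by (simp add: G.m_assoc)
              then show False using ac Cdef by simp
            qed
            then show ?thesis using ge ac bc Pdef by simp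
          qed
        next
          case aQ': False
          then have aQ: "a \<in> Q" using a by blast
          show ?thesis
          proof (cases "b \<in> P")
            case True
            have bc: "b \<in> carrier G" "\<tau> b > 0" using Pc True by auto
            have ac: "a \<in> carrier G" "\<tau> a = 0" using Qc aQ by auto
            have ge: "\<tau> (a \<otimes>\<^bsub>G\<^esub> b) \<ge> 0" using tmul[OF ac(1) bc(1)] ac bc by linarith
            have "\<tau> (a \<otimes>\<^bsub>G\<^esub> b) \<noteq> 0"
            proof
              assume z: "\<tau> (a \<otimes>\<^bsub>G\<^esub> b) = 0"
              have "a \<otimes>\<^bsub>G\<^esub> b \<in> C" using z ac bc Cdef by simp
              moreover have "inv\<^bsub>G\<^esub> a \<in> C" using iQc aQ Cdef by simp
              ultimately have "inv\<^bsub>G\<^esub> a \<otimes>\<^bsub>G\<^esub> (a \<otimes>\<^bsub>G\<^esub> b) \<in> C" using subgroup.m_closed[OF sg] by blast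
              then have "b \<in> C" using ac bc by (simp add: G.m_assoc[symmetric])
              then show False using bc Cdef by simp
            qed
            then show ?thesis using ge ac bc Pdef by simp
          next
            case False
            then have "b \<in> Q" using b by blast
            then show ?thesis using aQ Qmul by blast
          qed
        qed
      qed
      show "(P \<union> Q) \<inter> {\<one>\<^bsub>G\<^esub>} = {}" using Q1 Pdef t1 by auto
      show "(P \<union> Q) \<inter> (\<lambda>x. inv\<^bsub>G\<^esub> x) ` (P \<union> Q) = {}"
      proof -
        have "x \<notin> (\<lambda>x. inv\<^bsub>G\<^esub> x) ` (P \<union> Q)" if x: "x \<in> P \<union> Q" for x
        proof
          assume "x \<in> (\<lambda>x. inv\<^bsub>G\<^esub> x) ` (P \<union> Q)"
          then obtain y where y: "y \<in> P \<union> Q" "x = inv\<^bsub>G\<^esub> y" by blast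
          show False
          proof (cases "y \<in> P")
            case True
            then have "\<tau> x < 0" using y Pc tinv by auto
            then show False using x Pc Qc by force
          next
            case False
            then have yQ: "y \<in> Q" using y by blast
            then have "\<tau> x = 0" using y iQc by auto
            then have "x \<in> Q" using x Pc by force
            then show False using QiQ yQ y(2) by blast
          qed
        qed
        then show ?thesis by blast
      qed
      show "{\<one>\<^bsub>G\<^esub>} \<inter> (\<lambda>x. inv\<^bsub>G\<^esub> x) ` (P \<union> Q) = {}"
      proof -
        have "\<one>\<^bsub>G\<^esub> \<noteq> inv\<^bsub>G\<^esub> y" if y: "y \<in> P \<union> Q" for y
        proof
          assume e: "\<one>\<^bsub>G\<^esub> = inv\<^bsub>G\<^esub> y"
          have yc: "y \<in> carrier G" using y Pc Qc by blast
          then have "y = \<one>\<^bsub>G\<^esub>" using e by (metis G.inv_inv G.inv_one)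
          then show False using y Q1 Pc t1 by fastforce
        qed
        then show ?thesis by blast
      qed
      show "carrier G = P \<union> Q \<union> {\<one>\<^bsub>G\<^esub>} \<union> (\<lambda>x. inv\<^bsub>G\<^esub> x) ` (P \<union> Q)"
      proof (rule Set.set_eqI)
        fix g
        show "g \<in> carrier G \<longleftrightarrow> g \<in> P \<union> Q \<union> {\<one>\<^bsub>G\<^esub>} \<union> (\<lambda>x. inv\<^bsub>G\<^esub> x) ` (P \<union> Q)"
        proof
          assume g: "g \<in> carrier G"
          show "g \<in> P \<union> Q \<union> {\<one>\<^bsub>G\<^esub>} \<union> (\<lambda>x. inv\<^bsub>G\<^esub> x) ` (P \<union> Q)"
          proof (cases "\<tau> g > 0")
            case True then show ?thesis using g Pdef by blast
          next
            case False
            show ?thesis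
            proof (cases "\<tau> g = 0")
              case True
              then have "g \<in> C" using g Cdef by simp
              then show ?thesis using Ceq by blast
            next
              case False
              then have "g \<in> (\<lambda>x. inv\<^bsub>G\<^esub> x) ` P" using invP g `\<not> \<tau> g > 0` by simp
              then show ?thesis by blast
            qed
          qed
        next
          assume "g \<in> P \<union> Q \<union> {\<one>\<^bsub>G\<^esub>} \<union> (\<lambda>x. inv\<^bsub>G\<^esub> x) ` (P \<union> Q)"
          then show "g \<in> carrier G" using Pc Qc by auto
        qed
      qed
    qed
  qed
  show ?thesis using part1 part3 ocL imL unfolding P_def C_def by blast
qed

end
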